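(* For every finite set of ground terms $\Gamma$ and ground term $M$, the judgment $\Gamma\vdash M$ is provable in the natural deduction system $\mathcal N$ under theory $E$ if and only if the sequent $\downarrow\Gamma\vdash\downarrow M$ is provable in the sequent system $\mathcal D$.
   Context: Fix names, variables and constructors $\mathsf{pub}$ (unary), $\mathsf{sign},\mathsf{blind},\langle\cdot,\cdot\rangle,\{\cdot\}_\cdot$ (binary). Let $E$ be the union of AC-convergent equational theories $E_1,\dots,E_n$ with pairwise disjoint signatures $\Sigma_{E_i}$, disjoint from the constructors, each containing at most one associative-commutative (AC) binary symbol $\oplus_i$; $E$ is presented by a rewrite system $R_E$ terminating and confluent modulo AC; $\Sigma_E=\bigcup_i\Sigma_{E_i}$. Terms: names, variables, $\mathsf{pub}(M)$, $\mathsf{sign}(M,N)$, $\mathsf{blind}(M,N)$, $\langle M,N\rangle$, $\{M\}_N$, $g(M_1,\dots,M_j)$, $g\in\Sigma_E$. $\equiv$: equality modulo AC of all $\oplus_i$; $\approx_E$: equality modulo $E$; $\downarrow M$: $R_E$-normal form modulo AC; $\downarrow\Gamma$ elementwise. Guarded term: name, variable, or headed by a constructor. $E_i$-context: term with holes built only from symbols of $\Sigma_{E_i}$. A subterm occurrence $N$ of $M$ is a cross-theory subterm if headed by a symbol of some $\Sigma_{E_i}$ and it is an immediate argument of a subterm of $M$ headed by a symbol of $\Sigma_{E_j}$, $j\ne i$. $\Gamma,M$ means $\Gamma\cup\{M\}$. System $\mathcal N$: ($id$) $\Gamma\vdash M$ if $M\in\Gamma$; ($e_E$) from $\Gamma\vdash\{M\}_K$,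 $\Gamma\vdash K$ infer $\Gamma\vdash M$; ($e_I$) from $\Gamma\vdash M$, $\Gamma\vdash K$ infer $\Gamma\vdash\{M\}_K$; ($p_E$) from $\Gamma\vdash\langle M,N\rangle$ infer $\Gamma\vdash M$ and also $\Gamma\vdash N$; ($p_I$) from $\Gamma\vdash M,\Gamma\vdash N$ infer $\Gamma\vdash\langle M,N\rangle$; ($\mathsf{sign}_E$) from $\Gamma\vdash\mathsf{sign}(M,K)$, $\Gamma\vdash\mathsf{pub}(K)$ infer $\Gamma\vdash M$; ($\mathsf{sign}_I$) from $\Gamma\vdash M,\Gamma\vdash K$ infer $\Gamma\vdash\mathsf{sign}(M,K)$; ($\mathsf{blind}_{E1}$) from $\Gamma\vdash\mathsf{blind}(M,K)$, $\Gamma\vdash K$ infer $\Gamma\vdash M$; ($\mathsf{blind}_I$) from $\Gamma\vdash M,\Gamma\vdash K$ infer $\Gamma\vdash\mathsf{blind}(M,K)$; ($\mathsf{blind}_{E2}$) from $\Gamma\vdash\mathsf{sign}(\mathsf{blind}(M,R),K)$, $\Gamma\vdash R$ infer $\Gamma\vdash\mathsf{sign}(M,K)$; ($g_I$, $g\in\Sigma_E$) from $\Gamma\vdash M_1,\dots,\Gamma\vdash M_j$ infer $\Gamma\vdash g(M_1,\dots,M_j)$; ($\approx$) from $\Gamma\vdash N$ infer $\Gamma\vdash M$ if $M\approx_E N$. System $\mathcal D$ (sequents with all terms in normal form): ($id_{E_i}$, each $i$) $\Gamma\vdash M$ with no premise if $M\approx_E C[M_1,\dots,M_k]$ for an $E_i$-context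 $C$ and $M_l\in\Gamma$; (cut) from $\Gamma\vdash M$, $\Gamma,M\vdash T$ infer $\Gamma\vdash T$; ($p_L$) from $\Gamma,\langle M,N\rangle,M,N\vdash T$ infer $\Gamma,\langle M,N\rangle\vdash T$; ($p_R$) from $\Gamma\vdash M,\Gamma\vdash N$ infer $\Gamma\vdash\langle M,N\rangle$; ($e_L$) from $\Gamma,\{M\}_K\vdash K$ and $\Gamma,\{M\}_K,M,K\vdash N$ infer $\Gamma,\{M\}_K\vdash N$; ($e_R$) from $\Gamma\vdash M,\Gamma\vdash K$ infer $\Gamma\vdash\{M\}_K$; ($\mathsf{sign}_L$) from $\Gamma,\mathsf{sign}(M,K),\mathsf{pub}(L),M\vdash N$ infer $\Gamma,\mathsf{sign}(M,K),\mathsf{pub}(L)\vdash N$ if $K\equiv L$; ($\mathsf{sign}_R$) from $\Gamma\vdash M,\Gamma\vdash K$ infer $\Gamma\vdash\mathsf{sign}(M,K)$; ($\mathsf{blind}_{L1}$) from $\Gamma,\mathsf{blind}(M,K)\vdash K$ and $\Gamma,\mathsf{blind}(M,K),M,K\vdash N$ infer $\Gamma,\mathsf{blind}(M,K)\vdash N$; ($\mathsf{blind}_R$) from $\Gamma\vdash M,\Gamma\vdash K$ infer $\Gamma\vdash\mathsf{blind}(M,K)$; ($\mathsf{blind}_{L2}$) from $\Gamma,\mathsf{sign}(\mathsf{blind}(M,R),K)\vdash R$ and $\Gamma,\mathsf{sign}(\mathsf{blind}(M,R),K),\mathsf{sign}(M,K),R\vdash N$ infer $\Gamma,\mathsf{sign}(\mathsf{blind}(M,R),K)\vdash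 N$; ($gs$) from $\Gamma\vdash A$, $\Gamma,A\vdash M$ infer $\Gamma\vdash M$ if $A$ is a guarded subterm of a term in $\Gamma\cup\{M\}$; ($cs$) from $\Gamma\vdash N$, $\Gamma,N\vdash M$ infer $\Gamma\vdash M$ if $N$ is a cross-theory subterm of a term in $\Gamma\cup\{M\}$. *)

theory Defs
  imports Main
begin

section \<open>Terms\<close>

text \<open>Names 'n, variables 'v, and the symbols 'f of the equational signature Sigma_E.
  The constructors pub, sign, blind, pairing and encryption are separate term formers.\<close>

datatype ('n, 'v, 'f) trm =
    Nm 'n
  | Var 'v
  | Pub "('n, 'v, 'f) trm"
  | Sign "('n, 'v, 'f) trm" "('n, 'v, 'f) trm"
  | Blind "('n, 'v, 'f) trm" "('n, 'v, 'f) trm"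
  | Pair "('n, 'v, 'f) trm" "('n, 'v, 'f) trm"
  | Enc "('n, 'v, 'f) trm" "('n, 'v, 'f) trm"  \<comment> \<open>Enc M K is {M}_K\<close>
  | Fn 'f "('n, 'v, 'f) trm list"

fun vars :: "('n, 'v, 'f) trm \<Rightarrow> 'v set" where
  "vars (Nm n) = {}"
| "vars (Var x) = {x}"
| "vars (Pub M) = vars M"
| "vars (Sign M N) = vars M \<union> vars N"
| "vars (Blind M N) = vars M \<union> vars N"
| "vars (Pair M N) = vars M \<union> vars N"
| "vars (Enc M N) = vars M \<union> vars N"
| "vars (Fn f ts) = (\<Union>t\<in>set ts. vars t)"

definition ground :: "('n, 'v, 'f) trm \<Rightarrow> bool" where
  "ground t \<longleftrightarrow> vars t = {}"

fun wft :: "('f \<Rightarrow> nat) \<Rightarrow> ('n, 'v, 'f) trm \<Rightarrow> bool" where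
  "wft ar (Nm n) = True"
| "wft ar (Var x) = True"
| "wft ar (Pub M) = wft ar M"
| "wft ar (Sign M N) = (wft ar M \<and> wft ar N)"
| "wft ar (Blind M N) = (wft ar M \<and> wft ar N)"
| "wft ar (Pair M N) = (wft ar M \<and> wft ar N)"
| "wft ar (Enc M N) = (wft ar M \<and> wft ar N)"
| "wft ar (Fn f ts) = (length ts = ar f \<and> (\<forall>t\<in>set ts. wft ar t))"

fun subst :: "('v \<Rightarrow> ('n, 'v, 'f) trm) \<Rightarrow> ('n, 'v, 'f) trm \<Rightarrow> ('n, 'v, 'f) trm" where
  "subst \<sigma> (Nm n) = Nm n"
| "subst \<sigma> (Var x) = \<sigma> x"
| "subst \<sigma> (Pub M) = Pub (subst \<sigma> M)"
| "subst \<sigma> (Sign M N) = Sign (subst \<sigma> M) (subst \<sigma> N)"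
| "subst \<sigma> (Blind M N) = Blind (subst \<sigma> M) (subst \<sigma> N)"
| "subst \<sigma> (Pair M N) = Pair (subst \<sigma> M) (subst \<sigma> N)"
| "subst \<sigma> (Enc M N) = Enc (subst \<sigma> M) (subst \<sigma> N)"
| "subst \<sigma> (Fn f ts) = Fn f (map (subst \<sigma>) ts)"

fun subterms :: "('n, 'v, 'f) trm \<Rightarrow> ('n, 'v, 'f) trm set" where
  "subterms (Nm n) = {Nm n}"
| "subterms (Var x) = {Var x}"
| "subterms (Pub M) = insert (Pub M) (subterms M)"
| "subterms (Sign M N) = insert (Sign M N) (subterms M \<union> subterms N)"
| "subterms (Blind M N) = insert (Blind M N) (subterms M \<union> subterms N)"
| "subterms (Pair M N) = insert (Pair M N) (subterms M \<union> subterms N)"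
| "subterms (Enc M N) = insert (Enc M N) (subterms M \<union> subterms N)"
| "subterms (Fn f ts) = insert (Fn f ts) (\<Union>t\<in>set ts. subterms t)"

fun guarded :: "('n, 'v, 'f) trm \<Rightarrow> bool" where
  "guarded (Fn f ts) = False"
| "guarded t = True"

definition guarded_subterms :: "('n, 'v, 'f) trm set \<Rightarrow> ('n, 'v, 'f) trm set" where
  "guarded_subterms S = {A. A \<in> (\<Union>t\<in>S. subterms t) \<and> guarded A}"

text \<open>Cross-theory subterms; th f is the index i of the theory E_i with f in Sigma_{E_i}
  (this encodes pairwise disjointness of the signatures).\<close>
definition cross_subterms :: "('f \<Rightarrow> 'i) \<Rightarrow> ('n, 'v, 'f) trm \<Rightarrow> ('n, 'v, 'f) trm set" where
  "cross_subterms th t = {N. \<exists>g ts h us. Fn g ts \<in> subterms t \<and> N \<in> set ts \<and>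
                              N = Fn h us \<and> th h \<noteq> th g}"

fun pure :: "('f \<Rightarrow> 'i) \<Rightarrow> 'i \<Rightarrow> ('n, 'v, 'f) trm \<Rightarrow> bool" where
  "pure th i (Var x) = True"
| "pure th i (Fn f ts) = (th f = i \<and> (\<forall>t\<in>set ts. pure th i t))"
| "pure th i t = False"

text \<open>Terms of the form C[M_1,...,M_k] with C an E_i-context and all M_l in Gamma.\<close>
inductive_set ectx :: "('f \<Rightarrow> 'i) \<Rightarrow> ('f \<Rightarrow> nat) \<Rightarrow> 'i \<Rightarrow> ('n, 'v, 'f) trm set
                        \<Rightarrow> ('n, 'v, 'f) trm set"
  for th ar i \<Gamma> where
  hole: "M \<in> \<Gamma> \<Longrightarrow> M \<in> ectx th ar i \<Gamma>"
| sym: "th f = i \<Longrightarrow> length ts = ar f \<Longrightarrow> (\<forall>t\<in>set ts. t \<in> ectx th ar i \<Gamma>)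
        \<Longrightarrow> Fn f ts \<in> ectx th ar i \<Gamma>"

section \<open>Rewriting modulo AC\<close>

inductive_set ctxcl :: "(('n, 'v, 'f) trm \<times> ('n, 'v, 'f) trm) set
                        \<Rightarrow> (('n, 'v, 'f) trm \<times> ('n, 'v, 'f) trm) set"
  for S where
  root: "(s, t) \<in> S \<Longrightarrow> (s, t) \<in> ctxcl S"
| pub: "(s, t) \<in> ctxcl S \<Longrightarrow> (Pub s, Pub t) \<in> ctxcl S"
| sign1: "(s, t) \<in> ctxcl S \<Longrightarrow> (Sign s u, Sign t u) \<in> ctxcl S"
| sign2: "(s, t) \<in> ctxcl S \<Longrightarrow> (Sign u s, Sign u t) \<in> ctxcl S"
| blind1: "(s, t) \<in> ctxcl S \<Longrightarrow> (Blind s u, Blind t u) \<in> ctxcl S"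
| blind2: "(s, t) \<in> ctxcl S \<Longrightarrow> (Blind u s, Blind u t) \<in> ctxcl S"
| pair1: "(s, t) \<in> ctxcl S \<Longrightarrow> (Pair s u, Pair t u) \<in> ctxcl S"
| pair2: "(s, t) \<in> ctxcl S \<Longrightarrow> (Pair u s, Pair u t) \<in> ctxcl S"
| enc1: "(s, t) \<in> ctxcl S \<Longrightarrow> (Enc s u, Enc t u) \<in> ctxcl S"
| enc2: "(s, t) \<in> ctxcl S \<Longrightarrow> (Enc u s, Enc u t) \<in> ctxcl S"
| fn: "(s, t) \<in> ctxcl S \<Longrightarrow> (Fn f (xs @ s # ys), Fn f (xs @ t # ys)) \<in> ctxcl S"

definition ac_root :: "'f set \<Rightarrow> (('n, 'v, 'f) trm \<times> ('n, 'v, 'f) trm) set" where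
  "ac_root ACs =
     {(Fn f [a, b], Fn f [b, a]) | f a b. f \<in> ACs} \<union>
     {(Fn f [Fn f [a, b], c], Fn f [a, Fn f [b, c]]) | f a b c. f \<in> ACs}"

definition acstep :: "'f set \<Rightarrow> (('n, 'v, 'f) trm \<times> ('n, 'v, 'f) trm) set" where
  "acstep ACs = ctxcl (ac_root ACs)"

definition acq :: "'f set \<Rightarrow> (('n, 'v, 'f) trm \<times> ('n, 'v, 'f) trm) set" where
  "acq ACs = (acstep ACs \<union> (acstep ACs)\<inverse>)\<^sup>*"

definition rstep :: "(('n, 'v, 'f) trm \<times> ('n, 'v, 'f) trm) set
                     \<Rightarrow> (('n, 'v, 'f) trm \<times> ('n, 'v, 'f) trm) set" where
  "rstep R = ctxcl {(subst \<sigma> l, subst \<sigma> r) | \<sigma> l r. (l, r) \<in> R}"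

definition racstep :: "'f set \<Rightarrow> (('n, 'v, 'f) trm \<times> ('n, 'v, 'f) trm) set
                       \<Rightarrow> (('n, 'v, 'f) trm \<times> ('n, 'v, 'f) trm) set" where
  "racstep ACs R = acq ACs O rstep R O acq ACs"

text \<open>Equality modulo E (E presented by R together with AC).\<close>
definition eqE :: "'f set \<Rightarrow> (('n, 'v, 'f) trm \<times> ('n, 'v, 'f) trm) set
                   \<Rightarrow> (('n, 'v, 'f) trm \<times> ('n, 'v, 'f) trm) set" where
  "eqE ACs R = (rstep R \<union> acstep ACs \<union> (rstep R \<union> acstep ACs)\<inverse>)\<^sup>*"

definition irred :: "'f set \<Rightarrow> (('n, 'v, 'f) trm \<times> ('n, 'v, 'f) trm) set
                     \<Rightarrow> ('n, 'v, 'f) trm \<Rightarrow> bool" where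
  "irred ACs R t \<longleftrightarrow> (\<nexists>u. (t, u) \<in> racstep ACs R)"

text \<open>A chosen R-normal form modulo AC (unique up to AC under convergence).\<close>
definition nf :: "'f set \<Rightarrow> (('n, 'v, 'f) trm \<times> ('n, 'v, 'f) trm) set
                  \<Rightarrow> ('n, 'v, 'f) trm \<Rightarrow> ('n, 'v, 'f) trm" where
  "nf ACs R t = (SOME u. (t, u) \<in> (racstep ACs R)\<^sup>* \<and> irred ACs R u)"

definition convergent_modAC :: "'f set \<Rightarrow> (('n, 'v, 'f) trm \<times> ('n, 'v, 'f) trm) set \<Rightarrow> bool" where
  "convergent_modAC ACs R \<longleftrightarrow>
     wf ((racstep ACs R)\<inverse>) \<and>
     (\<forall>s t1 t2. (s, t1) \<in> (racstep ACs R)\<^sup>* \<and> (s, t2) \<in> (racstep ACs R)\<^sup>* \<longrightarrow>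
        (\<exists>u1 u2. (t1, u1) \<in> (racstep ACs R)\<^sup>* \<and> (t2, u2) \<in> (racstep ACs R)\<^sup>* \<and>
                 (u1, u2) \<in> acq ACs))"

text \<open>Standing assumptions: E is the union of finitely many theories E_i (symbols f belong to
  theory th f), each with at most one AC symbol (binary), presented by rules R, each rule built
  from the symbols of a single E_i; each E_i and the union are convergent modulo AC.\<close>
definition rules_of :: "('f \<Rightarrow> 'i) \<Rightarrow> 'i \<Rightarrow> (('n, 'v, 'f) trm \<times> ('n, 'v, 'f) trm) set
                        \<Rightarrow> (('n, 'v, 'f) trm \<times> ('n, 'v, 'f) trm) set" where
  "rules_of th i R = {(l, r) \<in> R. pure th i l \<and> pure th i r}"

definition E_setting :: "('f \<Rightarrow> 'i) \<Rightarrow> ('f \<Rightarrow> nat) \<Rightarrow> 'f set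
                         \<Rightarrow> (('n, 'v, 'f) trm \<times> ('n, 'v, 'f) trm) set \<Rightarrow> bool" where
  "E_setting th ar ACs R \<longleftrightarrow>
     finite (range th) \<and>
     (\<forall>f\<in>ACs. ar f = 2) \<and>
     (\<forall>f\<in>ACs. \<forall>g\<in>ACs. th f = th g \<longrightarrow> f = g) \<and>
     (\<forall>(l, r)\<in>R. (\<exists>i. pure th i l \<and> pure th i r) \<and> wft ar l \<and> wft ar r \<and>
                  (\<forall>x. l \<noteq> Var x) \<and> vars r \<subseteq> vars l) \<and>
     (\<forall>i. convergent_modAC (ACs \<inter> th -` {i}) (rules_of th i R)) \<and>
     convergent_modAC ACs R"

section \<open>Natural deduction system N\<close>

inductive nd :: "('f \<Rightarrow> nat) \<Rightarrow> 'f set \<Rightarrow> (('n, 'v, 'f) trm \<times> ('n, 'v, 'f) trm) set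
                 \<Rightarrow> ('n, 'v, 'f) trm set \<Rightarrow> ('n, 'v, 'f) trm \<Rightarrow> bool"
  for ar ACs R \<Gamma> where
  id: "M \<in> \<Gamma> \<Longrightarrow> nd ar ACs R \<Gamma> M"
| eE: "nd ar ACs R \<Gamma> (Enc M K) \<Longrightarrow> nd ar ACs R \<Gamma> K \<Longrightarrow> nd ar ACs R \<Gamma> M"
| eI: "nd ar ACs R \<Gamma> M \<Longrightarrow> nd ar ACs R \<Gamma> K \<Longrightarrow> nd ar ACs R \<Gamma> (Enc M K)"
| pE1: "nd ar ACs R \<Gamma> (Pair M N) \<Longrightarrow> nd ar ACs R \<Gamma> M"
| pE2: "nd ar ACs R \<Gamma> (Pair M N) \<Longrightarrow> nd ar ACs R \<Gamma> N"
| pI: "nd ar ACs R \<Gamma> M \<Longrightarrow> nd ar ACs R \<Gamma> N \<Longrightarrow> nd ar ACs R \<Gamma> (Pair M N)"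
| signE: "nd ar ACs R \<Gamma> (Sign M K) \<Longrightarrow> nd ar ACs R \<Gamma> (Pub K) \<Longrightarrow> nd ar ACs R \<Gamma> M"
| signI: "nd ar ACs R \<Gamma> M \<Longrightarrow> nd ar ACs R \<Gamma> K \<Longrightarrow> nd ar ACs R \<Gamma> (Sign M K)"
| blindE1: "nd ar ACs R \<Gamma> (Blind M K) \<Longrightarrow> nd ar ACs R \<Gamma> K \<Longrightarrow> nd ar ACs R \<Gamma> M"
| blindI: "nd ar ACs R \<Gamma> M \<Longrightarrow> nd ar ACs R \<Gamma> K \<Longrightarrow> nd ar ACs R \<Gamma> (Blind M K)"
| blindE2: "nd ar ACs R \<Gamma> (Sign (Blind M Rr) K) \<Longrightarrow> nd ar ACs R \<Gamma> Rr
            \<Longrightarrow> nd ar ACs R \<Gamma> (Sign M K)"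
| gI: "length Ms = ar g \<Longrightarrow> (\<forall>M\<in>set Ms. nd ar ACs R \<Gamma> M) \<Longrightarrow> nd ar ACs R \<Gamma> (Fn g Ms)"
| eq: "nd ar ACs R \<Gamma> N \<Longrightarrow> (M, N) \<in> eqE ACs R \<Longrightarrow> nd ar ACs R \<Gamma> M"

section \<open>Sequent system D\<close>

definition nseq :: "'f set \<Rightarrow> (('n, 'v, 'f) trm \<times> ('n, 'v, 'f) trm) set
                    \<Rightarrow> ('n, 'v, 'f) trm set \<Rightarrow> ('n, 'v, 'f) trm \<Rightarrow> bool" where
  "nseq ACs R \<Gamma> M \<longleftrightarrow> (\<forall>t\<in>insert M \<Gamma>. irred ACs R t)"

inductive sd :: "('f \<Rightarrow> 'i) \<Rightarrow> ('f \<Rightarrow> nat) \<Rightarrow> 'f set \<Rightarrow> (('n, 'v, 'f) trm \<times> ('n, 'v, 'f) trm) set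
                 \<Rightarrow> ('n, 'v, 'f) trm set \<Rightarrow> ('n, 'v, 'f) trm \<Rightarrow> bool"
  for th ar ACs R where
  idE: "nseq ACs R \<Gamma> M \<Longrightarrow> (M, C) \<in> eqE ACs R \<Longrightarrow> C \<in> ectx th ar i \<Gamma>
        \<Longrightarrow> sd th ar ACs R \<Gamma> M"
| cut: "nseq ACs R \<Gamma> T \<Longrightarrow> sd th ar ACs R \<Gamma> M \<Longrightarrow> sd th ar ACs R (insert M \<Gamma>) T
        \<Longrightarrow> sd th ar ACs R \<Gamma> T"
| pL: "nseq ACs R \<Gamma> T \<Longrightarrow> Pair M N \<in> \<Gamma> \<Longrightarrow> sd th ar ACs R (\<Gamma> \<union> {M, N}) T
       \<Longrightarrow> sd th ar ACs R \<Gamma> T"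
| pR: "nseq ACs R \<Gamma> (Pair M N) \<Longrightarrow> sd th ar ACs R \<Gamma> M \<Longrightarrow> sd th ar ACs R \<Gamma> N
       \<Longrightarrow> sd th ar ACs R \<Gamma> (Pair M N)"
| eL: "nseq ACs R \<Gamma> N \<Longrightarrow> Enc M K \<in> \<Gamma> \<Longrightarrow> sd th ar ACs R \<Gamma> K
       \<Longrightarrow> sd th ar ACs R (\<Gamma> \<union> {M, K}) N \<Longrightarrow> sd th ar ACs R \<Gamma> N"
| eR: "nseq ACs R \<Gamma> (Enc M K) \<Longrightarrow> sd th ar ACs R \<Gamma> M \<Longrightarrow> sd th ar ACs R \<Gamma> K
       \<Longrightarrow> sd th ar ACs R \<Gamma> (Enc M K)"
| signL: "nseq ACs R \<Gamma> N \<Longrightarrow> Sign M K \<in> \<Gamma> \<Longrightarrow> Pub L \<in> \<Gamma> \<Longrightarrow> (K, L) \<in> acq ACs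
          \<Longrightarrow> sd th ar ACs R (insert M \<Gamma>) N \<Longrightarrow> sd th ar ACs R \<Gamma> N"
| signR: "nseq ACs R \<Gamma> (Sign M K) \<Longrightarrow> sd th ar ACs R \<Gamma> M \<Longrightarrow> sd th ar ACs R \<Gamma> K
          \<Longrightarrow> sd th ar ACs R \<Gamma> (Sign M K)"
| blindL1: "nseq ACs R \<Gamma> N \<Longrightarrow> Blind M K \<in> \<Gamma> \<Longrightarrow> sd th ar ACs R \<Gamma> K
            \<Longrightarrow> sd th ar ACs R (\<Gamma> \<union> {M, K}) N \<Longrightarrow> sd th ar ACs R \<Gamma> N"
| blindR: "nseq ACs R \<Gamma> (Blind M K) \<Longrightarrow> sd th ar ACs R \<Gamma> M \<Longrightarrow> sd th ar ACs R \<Gamma> K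
           \<Longrightarrow> sd th ar ACs R \<Gamma> (Blind M K)"
| blindL2: "nseq ACs R \<Gamma> N \<Longrightarrow> Sign (Blind M Rr) K \<in> \<Gamma> \<Longrightarrow> sd th ar ACs R \<Gamma> Rr
            \<Longrightarrow> sd th ar ACs R (\<Gamma> \<union> {Sign M K, Rr}) N \<Longrightarrow> sd th ar ACs R \<Gamma> N"
| gs: "nseq ACs R \<Gamma> M \<Longrightarrow> A \<in> guarded_subterms (insert M \<Gamma>) \<Longrightarrow> sd th ar ACs R \<Gamma> A
       \<Longrightarrow> sd th ar ACs R (insert A \<Gamma>) M \<Longrightarrow> sd th ar ACs R \<Gamma> M"
| cs: "nseq ACs R \<Gamma> M \<Longrightarrow> N \<in> (\<Union>t\<in>insert M \<Gamma>. cross_subterms th t) \<Longrightarrow> sd th ar ACs R \<Gamma> N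
       \<Longrightarrow> sd th ar ACs R (insert N \<Gamma>) M \<Longrightarrow> sd th ar ACs R \<Gamma> M"

end

theory Submission
  imports Defs
begin

lemma eqE_refl[simp]: "(t,t) \<in> eqE ACs R" by (simp add: eqE_def)

lemma eqE_sym: "(s,t) \<in> eqE ACs R \<Longrightarrow> (t,s) \<in> eqE ACs R"
proof -
  assume a: "(s,t) \<in> eqE ACs R"
  let ?S = "rstep R \<union> acstep ACs"
  have e: "(?S \<union> ?S\<inverse>)\<inverse> = ?S \<union> ?S\<inverse>" by auto
  from a have "(t,s) \<in> ((?S \<union> ?S\<inverse>)\<inverse>)\<^sup>*" unfolding eqE_def by (simp add: rtrancl_converseI)
  thus ?thesis unfolding eqE_def e .
qed

lemma eqE_trans: "(s,t) \<in> eqE ACs R \<Longrightarrow> (t,u) \<in> eqE ACs R \<Longrightarrow> (s,u) \<in> eqE ACs R"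
  unfolding eqE_def by (rule rtrancl_trans)

lemma acq_eqE: "(s,t) \<in> acq ACs \<Longrightarrow> (s,t) \<in> eqE ACs R"
proof -
  assume "(s,t) \<in> acq ACs"
  moreover have "acstep ACs \<union> (acstep ACs)\<inverse> \<subseteq> rstep R \<union> acstep ACs \<union> (rstep R \<union> acstep ACs)\<inverse>" by auto
  ultimately show ?thesis unfolding acq_def eqE_def using rtrancl_mono by blast
qed

lemma acq_refl[simp]: "(t,t) \<in> acq ACs" by (simp add: acq_def)

lemma rstep_eqE: "(s,t) \<in> rstep R \<Longrightarrow> (s,t) \<in> eqE ACs R"
  unfolding eqE_def by auto

lemma racstep_eqE: "(s,t) \<in> racstep ACs R \<Longrightarrow> (s,t) \<in> eqE ACs R"
  unfolding racstep_def by (blast intro: eqE_trans acq_eqE rstep_eqE)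

lemma racstep_rtrancl_eqE: "(s,t) \<in> (racstep ACs R)\<^sup>* \<Longrightarrow> (s,t) \<in> eqE ACs R"
  by (induction rule: rtrancl_induct) (auto intro: eqE_trans racstep_eqE)

lemma eqE_ctx:
  assumes c: "\<And>Z s t. (s,t) \<in> ctxcl Z \<Longrightarrow> (c s, c t) \<in> ctxcl Z"
    and st: "(s,t) \<in> eqE ACs R"
  shows "(c s, c t) \<in> eqE ACs R"
  using st unfolding eqE_def
proof (induction rule: rtrancl_induct)
  case base thus ?case by simp
next
  case (step y z)
  have "(c y, c z) \<in> rstep R \<union> acstep ACs \<union> (rstep R \<union> acstep ACs)\<inverse>"
    using step.hyps(2) c unfolding rstep_def acstep_def by blast
  thus ?case using step.IH by (rule rtrancl_into_rtrancl[rotated])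
qed

lemma acq_ctx:
  assumes c: "\<And>Z s t. (s,t) \<in> ctxcl Z \<Longrightarrow> (c s, c t) \<in> ctxcl Z"
    and st: "(s,t) \<in> acq ACs"
  shows "(c s, c t) \<in> acq ACs"
  using st unfolding acq_def
proof (induction rule: rtrancl_induct)
  case base thus ?case by simp
next
  case (step y z)
  have "(c y, c z) \<in> acstep ACs \<union> (acstep ACs)\<inverse>"
    using step.hyps(2) c unfolding acstep_def by blast
  thus ?case using step.IH by (rule rtrancl_into_rtrancl[rotated])
qed

lemma eqE_Pub: "(a,a') \<in> eqE ACs R \<Longrightarrow> (Pub a, Pub a') \<in> eqE ACs R"
  by (rule eqE_ctx[where c=Pub]) (auto intro: ctxcl.intros)

lemma eqE_Enc: "(a,a') \<in> eqE ACs R \<Longrightarrow> (b,b') \<in> eqE ACs R \<Longrightarrow> (Enc a b, Enc a' b') \<in> eqE ACs R"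
  apply (rule eqE_trans[OF eqE_ctx[where c="\<lambda>x. Enc x b"] eqE_ctx[where c="\<lambda>x. Enc a' x"]])
  by (auto intro: ctxcl.intros)
lemma eqE_Sign: "(a,a') \<in> eqE ACs R \<Longrightarrow> (b,b') \<in> eqE ACs R \<Longrightarrow> (Sign a b, Sign a' b') \<in> eqE ACs R"
  apply (rule eqE_trans[OF eqE_ctx[where c="\<lambda>x. Sign x b"] eqE_ctx[where c="\<lambda>x. Sign a' x"]])
  by (auto intro: ctxcl.intros)
lemma eqE_Blind: "(a,a') \<in> eqE ACs R \<Longrightarrow> (b,b') \<in> eqE ACs R \<Longrightarrow> (Blind a b, Blind a' b') \<in> eqE ACs R"
  apply (rule eqE_trans[OF eqE_ctx[where c="\<lambda>x. Blind x b"] eqE_ctx[where c="\<lambda>x. Blind a' x"]])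
  by (auto intro: ctxcl.intros)
lemma eqE_Pair: "(a,a') \<in> eqE ACs R \<Longrightarrow> (b,b') \<in> eqE ACs R \<Longrightarrow> (Pair a b, Pair a' b') \<in> eqE ACs R"
  apply (rule eqE_trans[OF eqE_ctx[where c="\<lambda>x. Pair x b"] eqE_ctx[where c="\<lambda>x. Pair a' x"]])
  by (auto intro: ctxcl.intros)

lemma eqE_Fn_aux: "list_all2 (\<lambda>a b. (a,b) \<in> eqE ACs R) as bs \<Longrightarrow>
   (Fn g (xs @ as), Fn g (xs @ bs)) \<in> eqE ACs R"
proof (induction as arbitrary: bs xs)
  case Nil thus ?case by simp
next
  case (Cons a as)
  then obtain b bs' where bs: "bs = b # bs'" "(a,b) \<in> eqE ACs R"
    "list_all2 (\<lambda>a b. (a,b) \<in> eqE ACs R) as bs'" by (cases bs) auto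
  have 1: "(Fn g (xs @ a # as), Fn g (xs @ b # as)) \<in> eqE ACs R"
    by (rule eqE_ctx[where c="\<lambda>x. Fn g (xs @ x # as)", OF _ bs(2)]) (auto intro: ctxcl.fn)
  have 2: "(Fn g (xs @ b # as), Fn g (xs @ b # bs')) \<in> eqE ACs R"
    using Cons.IH[OF bs(3), of "xs @ [b]"] by simp
  show ?case using eqE_trans[OF 1 2] bs by simp
qed

lemma eqE_Fn_map: "(\<forall>M\<in>set Ms. (M, f M) \<in> eqE ACs R) \<Longrightarrow> (Fn g Ms, Fn g (map f Ms)) \<in> eqE ACs R"
  using eqE_Fn_aux[of ACs R Ms "map f Ms" g "[]"] by (simp add: list_all2_conv_all_nth)

section \<open>Normal forms\<close>

lemma nf_ex:
  assumes "convergent_modAC ACs R"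
  shows "\<exists>u. (t,u) \<in> (racstep ACs R)\<^sup>* \<and> irred ACs R u"
proof -
  have wf: "wf ((racstep ACs R)\<inverse>)" using assms by (simp add: convergent_modAC_def)
  show ?thesis
  proof (induction t rule: wf_induct[OF wf])
    case (1 t)
    show ?case
    proof (cases "irred ACs R t")
      case True thus ?thesis by blast
    next
      case False then obtain t' where tt: "(t,t') \<in> racstep ACs R" by (auto simp: irred_def)
      with 1 obtain u where "(t',u) \<in> (racstep ACs R)\<^sup>*" "irred ACs R u" by auto
      thus ?thesis using tt by (meson converse_rtrancl_into_rtrancl)
    qed
  qed
qed

lemma nf_props:
  assumes "convergent_modAC ACs R"
  shows "(t, nf ACs R t) \<in> (racstep ACs R)\<^sup>*" "irred ACs R (nf ACs R t)"
  using someI_ex[OF nf_ex[OF assms, of t]] unfolding nf_def by auto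

lemma nf_eqE: "convergent_modAC ACs R \<Longrightarrow> (t, nf ACs R t) \<in> eqE ACs R"
  using nf_props(1) racstep_rtrancl_eqE by blast


section \<open>Constructor decomposition\<close>

lemma ac_step_Enc: "(Enc a b, x) \<in> ctxcl (ac_root ACs) \<Longrightarrow>
  (\<exists>a'. x = Enc a' b \<and> (a,a') \<in> ctxcl (ac_root ACs)) \<or> (\<exists>b'. x = Enc a b' \<and> (b,b') \<in> ctxcl (ac_root ACs))"
  by (erule ctxcl.cases) (auto simp: ac_root_def)
lemma ac_step_Enc': "(x, Enc a b) \<in> ctxcl (ac_root ACs) \<Longrightarrow>
  (\<exists>a'. x = Enc a' b \<and> (a',a) \<in> ctxcl (ac_root ACs)) \<or> (\<exists>b'. x = Enc a b' \<and> (b',b) \<in> ctxcl (ac_root ACs))"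
  by (erule ctxcl.cases) (auto simp: ac_root_def)
lemma acq_Enc: "(Enc a b, x) \<in> acq ACs \<Longrightarrow> \<exists>a' b'. x = Enc a' b' \<and> (a,a') \<in> acq ACs \<and> (b,b') \<in> acq ACs"
  unfolding acq_def
proof (induction rule: rtrancl_induct)
  case base thus ?case by auto
next
  case (step y z)
  then obtain a' b' where y: "y = Enc a' b'" "(a,a') \<in> (acstep ACs \<union> (acstep ACs)\<inverse>)\<^sup>*"
     "(b,b') \<in> (acstep ACs \<union> (acstep ACs)\<inverse>)\<^sup>*" by blast
  from step.hyps(2) y(1) show ?case
    using ac_step_Enc[of a' b' z ACs] ac_step_Enc'[of z a' b' ACs] y(2,3) unfolding acstep_def
    by (auto intro: rtrancl_into_rtrancl)
qed
lemma rstep_Enc: "\<forall>(l,r)\<in>R. \<exists>f ts. l = Fn f ts \<Longrightarrow> (Enc a b, x) \<in> rstep R \<Longrightarrow>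
  (\<exists>a'. x = Enc a' b \<and> (a,a') \<in> rstep R) \<or> (\<exists>b'. x = Enc a b' \<and> (b,b') \<in> rstep R)"
  unfolding rstep_def by (erule ctxcl.cases) fastforce+
lemma irred_Enc:
  assumes lh: "\<forall>(l,r)\<in>R. \<exists>f ts. l = Fn f ts" and ia: "irred ACs R a" and ib: "irred ACs R b"
  shows "irred ACs R (Enc a b)"
proof -
  { fix u assume "(Enc a b, u) \<in> racstep ACs R"
    then obtain x y where xy: "(Enc a b, x) \<in> acq ACs" "(x,y) \<in> rstep R" unfolding racstep_def by blast
    from acq_Enc[OF xy(1)] obtain a' b' where x: "x = Enc a' b'" "(a,a') \<in> acq ACs" "(b,b') \<in> acq ACs" by blast
    from rstep_Enc[OF lh xy(2)[unfolded x(1)]] have False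
    proof
      assume "\<exists>a''. y = Enc a'' b' \<and> (a',a'') \<in> rstep R"
      then obtain a'' where "(a',a'') \<in> rstep R" by blast
      hence "(a,a'') \<in> racstep ACs R" using x(2) unfolding racstep_def by (meson relcompI acq_refl)
      thus False using ia unfolding irred_def by blast
    next
      assume "\<exists>b''. y = Enc a' b'' \<and> (b',b'') \<in> rstep R"
      then obtain b'' where "(b',b'') \<in> rstep R" by blast
      hence "(b,b'') \<in> racstep ACs R" using x(3) unfolding racstep_def by (meson relcompI acq_refl)
      thus False using ib unfolding irred_def by blast
    qed }
  thus ?thesis unfolding irred_def by blast
qed

lemma ac_step_Sign: "(Sign a b, x) \<in> ctxcl (ac_root ACs) \<Longrightarrow>
  (\<exists>a'. x = Sign a' b \<and> (a,a') \<in> ctxcl (ac_root ACs)) \<or> (\<exists>b'. x = Sign a b' \<and> (b,b') \<in> ctxcl (ac_root ACs))"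
  by (erule ctxcl.cases) (auto simp: ac_root_def)
lemma ac_step_Sign': "(x, Sign a b) \<in> ctxcl (ac_root ACs) \<Longrightarrow>
  (\<exists>a'. x = Sign a' b \<and> (a',a) \<in> ctxcl (ac_root ACs)) \<or> (\<exists>b'. x = Sign a b' \<and> (b',b) \<in> ctxcl (ac_root ACs))"
  by (erule ctxcl.cases) (auto simp: ac_root_def)
lemma acq_Sign: "(Sign a b, x) \<in> acq ACs \<Longrightarrow> \<exists>a' b'. x = Sign a' b' \<and> (a,a') \<in> acq ACs \<and> (b,b') \<in> acq ACs"
  unfolding acq_def
proof (induction rule: rtrancl_induct)
  case base thus ?case by auto
next
  case (step y z)
  then obtain a' b' where y: "y = Sign a' b'" "(a,a') \<in> (acstep ACs \<union> (acstep ACs)\<inverse>)\<^sup>*"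
     "(b,b') \<in> (acstep ACs \<union> (acstep ACs)\<inverse>)\<^sup>*" by blast
  from step.hyps(2) y(1) show ?case
    using ac_step_Sign[of a' b' z ACs] ac_step_Sign'[of z a' b' ACs] y(2,3) unfolding acstep_def
    by (auto intro: rtrancl_into_rtrancl)
qed
lemma rstep_Sign: "\<forall>(l,r)\<in>R. \<exists>f ts. l = Fn f ts \<Longrightarrow> (Sign a b, x) \<in> rstep R \<Longrightarrow>
  (\<exists>a'. x = Sign a' b \<and> (a,a') \<in> rstep R) \<or> (\<exists>b'. x = Sign a b' \<and> (b,b') \<in> rstep R)"
  unfolding rstep_def by (erule ctxcl.cases) fastforce+
lemma irred_Sign:
  assumes lh: "\<forall>(l,r)\<in>R. \<exists>f ts. l = Fn f ts" and ia: "irred ACs R a" and ib: "irred ACs R b"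
  shows "irred ACs R (Sign a b)"
proof -
  { fix u assume "(Sign a b, u) \<in> racstep ACs R"
    then obtain x y where xy: "(Sign a b, x) \<in> acq ACs" "(x,y) \<in> rstep R" unfolding racstep_def by blast
    from acq_Sign[OF xy(1)] obtain a' b' where x: "x = Sign a' b'" "(a,a') \<in> acq ACs" "(b,b') \<in> acq ACs" by blast
    from rstep_Sign[OF lh xy(2)[unfolded x(1)]] have False
    proof
      assume "\<exists>a''. y = Sign a'' b' \<and> (a',a'') \<in> rstep R"
      then obtain a'' where "(a',a'') \<in> rstep R" by blast
      hence "(a,a'') \<in> racstep ACs R" using x(2) unfolding racstep_def by (meson relcompI acq_refl)
      thus False using ia unfolding irred_def by blast
    next
      assume "\<exists>b''. y = Sign a' b'' \<and> (b',b'') \<in> rstep R"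
      then obtain b'' where "(b',b'') \<in> rstep R" by blast
      hence "(b,b'') \<in> racstep ACs R" using x(3) unfolding racstep_def by (meson relcompI acq_refl)
      thus False using ib unfolding irred_def by blast
    qed }
  thus ?thesis unfolding irred_def by blast
qed

lemma ac_step_Blind: "(Blind a b, x) \<in> ctxcl (ac_root ACs) \<Longrightarrow>
  (\<exists>a'. x = Blind a' b \<and> (a,a') \<in> ctxcl (ac_root ACs)) \<or> (\<exists>b'. x = Blind a b' \<and> (b,b') \<in> ctxcl (ac_root ACs))"
  by (erule ctxcl.cases) (auto simp: ac_root_def)
lemma ac_step_Blind': "(x, Blind a b) \<in> ctxcl (ac_root ACs) \<Longrightarrow>
  (\<exists>a'. x = Blind a' b \<and> (a',a) \<in> ctxcl (ac_root ACs)) \<or> (\<exists>b'. x = Blind a b' \<and> (b',b) \<in> ctxcl (ac_root ACs))"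
  by (erule ctxcl.cases) (auto simp: ac_root_def)
lemma acq_Blind: "(Blind a b, x) \<in> acq ACs \<Longrightarrow> \<exists>a' b'. x = Blind a' b' \<and> (a,a') \<in> acq ACs \<and> (b,b') \<in> acq ACs"
  unfolding acq_def
proof (induction rule: rtrancl_induct)
  case base thus ?case by auto
next
  case (step y z)
  then obtain a' b' where y: "y = Blind a' b'" "(a,a') \<in> (acstep ACs \<union> (acstep ACs)\<inverse>)\<^sup>*"
     "(b,b') \<in> (acstep ACs \<union> (acstep ACs)\<inverse>)\<^sup>*" by blast
  from step.hyps(2) y(1) show ?case
    using ac_step_Blind[of a' b' z ACs] ac_step_Blind'[of z a' b' ACs] y(2,3) unfolding acstep_def
    by (auto intro: rtrancl_into_rtrancl)
qed
lemma rstep_Blind: "\<forall>(l,r)\<in>R. \<exists>f ts. l = Fn f ts \<Longrightarrow> (Blind a b, x) \<in> rstep R \<Longrightarrow>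
  (\<exists>a'. x = Blind a' b \<and> (a,a') \<in> rstep R) \<or> (\<exists>b'. x = Blind a b' \<and> (b,b') \<in> rstep R)"
  unfolding rstep_def by (erule ctxcl.cases) fastforce+
lemma irred_Blind:
  assumes lh: "\<forall>(l,r)\<in>R. \<exists>f ts. l = Fn f ts" and ia: "irred ACs R a" and ib: "irred ACs R b"
  shows "irred ACs R (Blind a b)"
proof -
  { fix u assume "(Blind a b, u) \<in> racstep ACs R"
    then obtain x y where xy: "(Blind a b, x) \<in> acq ACs" "(x,y) \<in> rstep R" unfolding racstep_def by blast
    from acq_Blind[OF xy(1)] obtain a' b' where x: "x = Blind a' b'" "(a,a') \<in> acq ACs" "(b,b') \<in> acq ACs" by blast
    from rstep_Blind[OF lh xy(2)[unfolded x(1)]] have False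
    proof
      assume "\<exists>a''. y = Blind a'' b' \<and> (a',a'') \<in> rstep R"
      then obtain a'' where "(a',a'') \<in> rstep R" by blast
      hence "(a,a'') \<in> racstep ACs R" using x(2) unfolding racstep_def by (meson relcompI acq_refl)
      thus False using ia unfolding irred_def by blast
    next
      assume "\<exists>b''. y = Blind a' b'' \<and> (b',b'') \<in> rstep R"
      then obtain b'' where "(b',b'') \<in> rstep R" by blast
      hence "(b,b'') \<in> racstep ACs R" using x(3) unfolding racstep_def by (meson relcompI acq_refl)
      thus False using ib unfolding irred_def by blast
    qed }
  thus ?thesis unfolding irred_def by blast
qed

lemma ac_step_Pair: "(Pair a b, x) \<in> ctxcl (ac_root ACs) \<Longrightarrow>
  (\<exists>a'. x = Pair a' b \<and> (a,a') \<in> ctxcl (ac_root ACs)) \<or> (\<exists>b'. x = Pair a b' \<and> (b,b') \<in> ctxcl (ac_root ACs))"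
  by (erule ctxcl.cases) (auto simp: ac_root_def)
lemma ac_step_Pair': "(x, Pair a b) \<in> ctxcl (ac_root ACs) \<Longrightarrow>
  (\<exists>a'. x = Pair a' b \<and> (a',a) \<in> ctxcl (ac_root ACs)) \<or> (\<exists>b'. x = Pair a b' \<and> (b',b) \<in> ctxcl (ac_root ACs))"
  by (erule ctxcl.cases) (auto simp: ac_root_def)
lemma acq_Pair: "(Pair a b, x) \<in> acq ACs \<Longrightarrow> \<exists>a' b'. x = Pair a' b' \<and> (a,a') \<in> acq ACs \<and> (b,b') \<in> acq ACs"
  unfolding acq_def
proof (induction rule: rtrancl_induct)
  case base thus ?case by auto
next
  case (step y z)
  then obtain a' b' where y: "y = Pair a' b'" "(a,a') \<in> (acstep ACs \<union> (acstep ACs)\<inverse>)\<^sup>*"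
     "(b,b') \<in> (acstep ACs \<union> (acstep ACs)\<inverse>)\<^sup>*" by blast
  from step.hyps(2) y(1) show ?case
    using ac_step_Pair[of a' b' z ACs] ac_step_Pair'[of z a' b' ACs] y(2,3) unfolding acstep_def
    by (auto intro: rtrancl_into_rtrancl)
qed
lemma rstep_Pair: "\<forall>(l,r)\<in>R. \<exists>f ts. l = Fn f ts \<Longrightarrow> (Pair a b, x) \<in> rstep R \<Longrightarrow>
  (\<exists>a'. x = Pair a' b \<and> (a,a') \<in> rstep R) \<or> (\<exists>b'. x = Pair a b' \<and> (b,b') \<in> rstep R)"
  unfolding rstep_def by (erule ctxcl.cases) fastforce+
lemma irred_Pair:
  assumes lh: "\<forall>(l,r)\<in>R. \<exists>f ts. l = Fn f ts" and ia: "irred ACs R a" and ib: "irred ACs R b"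
  shows "irred ACs R (Pair a b)"
proof -
  { fix u assume "(Pair a b, u) \<in> racstep ACs R"
    then obtain x y where xy: "(Pair a b, x) \<in> acq ACs" "(x,y) \<in> rstep R" unfolding racstep_def by blast
    from acq_Pair[OF xy(1)] obtain a' b' where x: "x = Pair a' b'" "(a,a') \<in> acq ACs" "(b,b') \<in> acq ACs" by blast
    from rstep_Pair[OF lh xy(2)[unfolded x(1)]] have False
    proof
      assume "\<exists>a''. y = Pair a'' b' \<and> (a',a'') \<in> rstep R"
      then obtain a'' where "(a',a'') \<in> rstep R" by blast
      hence "(a,a'') \<in> racstep ACs R" using x(2) unfolding racstep_def by (meson relcompI acq_refl)
      thus False using ia unfolding irred_def by blast
    next
      assume "\<exists>b''. y = Pair a' b'' \<and> (b',b'') \<in> rstep R"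
      then obtain b'' where "(b',b'') \<in> rstep R" by blast
      hence "(b,b'') \<in> racstep ACs R" using x(3) unfolding racstep_def by (meson relcompI acq_refl)
      thus False using ib unfolding irred_def by blast
    qed }
  thus ?thesis unfolding irred_def by blast
qed

lemma ac_step_Pub: "(Pub a, x) \<in> ctxcl (ac_root ACs) \<Longrightarrow>
  (\<exists>a'. x = Pub a' \<and> (a,a') \<in> ctxcl (ac_root ACs))"
  by (erule ctxcl.cases) (auto simp: ac_root_def)
lemma ac_step_Pub': "(x, Pub a) \<in> ctxcl (ac_root ACs) \<Longrightarrow>
  (\<exists>a'. x = Pub a' \<and> (a',a) \<in> ctxcl (ac_root ACs))"
  by (erule ctxcl.cases) (auto simp: ac_root_def)
lemma acq_Pub: "(Pub a, x) \<in> acq ACs \<Longrightarrow> \<exists>a'. x = Pub a' \<and> (a,a') \<in> acq ACs"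
  unfolding acq_def
proof (induction rule: rtrancl_induct)
  case base thus ?case by auto
next
  case (step y z)
  then obtain a' where y: "y = Pub a'" "(a,a') \<in> (acstep ACs \<union> (acstep ACs)\<inverse>)\<^sup>*" by blast
  from step.hyps(2) y(1) show ?case
    using ac_step_Pub[of a' z ACs] ac_step_Pub'[of z a' ACs] y(2) unfolding acstep_def
    by (auto intro: rtrancl_into_rtrancl)
qed
lemma rstep_Pub: "\<forall>(l,r)\<in>R. \<exists>f ts. l = Fn f ts \<Longrightarrow> (Pub a, x) \<in> rstep R \<Longrightarrow>
  (\<exists>a'. x = Pub a' \<and> (a,a') \<in> rstep R)"
  unfolding rstep_def by (erule ctxcl.cases) fastforce+
lemma irred_Pub:
  assumes lh: "\<forall>(l,r)\<in>R. \<exists>f ts. l = Fn f ts" and ia: "irred ACs R a"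
  shows "irred ACs R (Pub a)"
proof -
  { fix u assume "(Pub a, u) \<in> racstep ACs R"
    then obtain x y where xy: "(Pub a, x) \<in> acq ACs" "(x,y) \<in> rstep R" unfolding racstep_def by blast
    from acq_Pub[OF xy(1)] obtain a' where x: "x = Pub a'" "(a,a') \<in> acq ACs" by blast
    from rstep_Pub[OF lh xy(2)[unfolded x(1)]] obtain a'' where "(a',a'') \<in> rstep R" by blast
    hence "(a,a'') \<in> racstep ACs R" using x(2) unfolding racstep_def by (meson relcompI acq_refl)
    hence False using ia unfolding irred_def by blast }
  thus ?thesis unfolding irred_def by blast
qed


section \<open>Sequent system properties\<close>

lemma sd_nseq: "sd th ar ACs R \<Gamma> T \<Longrightarrow> nseq ACs R \<Gamma> T"
  by (induction rule: sd.induct) auto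

lemma ectx_mono: "C \<in> ectx th ar i \<Gamma> \<Longrightarrow> \<Gamma> \<subseteq> \<Delta> \<Longrightarrow> C \<in> ectx th ar i \<Delta>"
  by (induction rule: ectx.induct) (auto intro: ectx.intros)

lemma guarded_subterms_mono: "\<Gamma> \<subseteq> \<Delta> \<Longrightarrow> guarded_subterms \<Gamma> \<subseteq> guarded_subterms \<Delta>"
  unfolding guarded_subterms_def by auto

lemma sd_weak:
  "sd th ar ACs R \<Gamma> T \<Longrightarrow> \<Gamma> \<subseteq> \<Delta> \<Longrightarrow> \<forall>t\<in>\<Delta>. irred ACs R t \<Longrightarrow> sd th ar ACs R \<Delta> T"
proof (induction arbitrary: \<Delta> rule: sd.induct)
  case (idE \<Gamma> M C i)
  show ?case
  proof (rule sd.idE[where C=C and i=i])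
    show "nseq ACs R \<Delta> M" using idE.hyps(1) idE.prems(2) by (simp add: nseq_def)
    show "(M, C) \<in> eqE ACs R" by (rule idE.hyps(2))
    show "C \<in> ectx th ar i \<Delta>" using idE.hyps(3) idE.prems(1) by (rule ectx_mono)
  qed
next
  case (cut \<Gamma> T M)
  have n: "nseq ACs R \<Gamma> M" using sd_nseq[OF cut.hyps(2)] .
  show ?case
  proof (rule sd.cut[where M=M])
    show "nseq ACs R \<Delta> T" using cut.hyps(1) cut.prems(2) by (simp add: nseq_def)
    show "sd th ar ACs R \<Delta> M" using cut.IH(1) cut.prems by blast
    show "sd th ar ACs R (insert M \<Delta>) T"
      by (rule cut.IH(2)) (use cut.prems n in \<open>auto simp: nseq_def\<close>)
  qed
next
  case (pL \<Gamma> T M N)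
  have n: "nseq ACs R (\<Gamma> \<union> {M, N}) T" using sd_nseq[OF pL.hyps(3)] .
  show ?case
  proof (rule sd.pL[where M=M and N=N])
    show "nseq ACs R \<Delta> T" using pL.hyps(1) pL.prems(2) by (simp add: nseq_def)
    show "Pair M N \<in> \<Delta>" using pL.hyps(2) pL.prems(1) by blast
    show "sd th ar ACs R (\<Delta> \<union> {M, N}) T"
      by (rule pL.IH) (use pL.prems n in \<open>auto simp: nseq_def\<close>)
  qed
next
  case (pR \<Gamma> M N)
  show ?case
  proof (rule sd.pR)
    show "nseq ACs R \<Delta> (Pair M N)" using pR.hyps(1) pR.prems(2) by (simp add: nseq_def)
    show "sd th ar ACs R \<Delta> M" using pR.IH(1) pR.prems by blast
    show "sd th ar ACs R \<Delta> N" using pR.IH(2) pR.prems by blast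
  qed
next
  case (eL \<Gamma> N M K)
  have n: "nseq ACs R (\<Gamma> \<union> {M, K}) N" using sd_nseq[OF eL.hyps(4)] .
  show ?case
  proof (rule sd.eL[where M=M and K=K])
    show "nseq ACs R \<Delta> N" using eL.hyps(1) eL.prems(2) by (simp add: nseq_def)
    show "Enc M K \<in> \<Delta>" using eL.hyps(2) eL.prems(1) by blast
    show "sd th ar ACs R \<Delta> K" using eL.IH(1) eL.prems by blast
    show "sd th ar ACs R (\<Delta> \<union> {M, K}) N"
      by (rule eL.IH(2)) (use eL.prems n in \<open>auto simp: nseq_def\<close>)
  qed
next
  case (eR \<Gamma> M K)
  show ?case
  proof (rule sd.eR)
    show "nseq ACs R \<Delta> (Enc M K)" using eR.hyps(1) eR.prems(2) by (simp add: nseq_def)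
    show "sd th ar ACs R \<Delta> M" using eR.IH(1) eR.prems by blast
    show "sd th ar ACs R \<Delta> K" using eR.IH(2) eR.prems by blast
  qed
next
  case (signL \<Gamma> N M K L)
  have n: "nseq ACs R (insert M \<Gamma>) N" using sd_nseq[OF signL.hyps(5)] .
  show ?case
  proof (rule sd.signL[where M=M and K=K and L=L])
    show "nseq ACs R \<Delta> N" using signL.hyps(1) signL.prems(2) by (simp add: nseq_def)
    show "Sign M K \<in> \<Delta>" using signL.hyps(2) signL.prems(1) by blast
    show "Pub L \<in> \<Delta>" using signL.hyps(3) signL.prems(1) by blast
    show "(K, L) \<in> acq ACs" by (rule signL.hyps(4))
    show "sd th ar ACs R (insert M \<Delta>) N"
      by (rule signL.IH) (use signL.prems n in \<open>auto simp: nseq_def\<close>)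
  qed
next
  case (signR \<Gamma> M K)
  show ?case
  proof (rule sd.signR)
    show "nseq ACs R \<Delta> (Sign M K)" using signR.hyps(1) signR.prems(2) by (simp add: nseq_def)
    show "sd th ar ACs R \<Delta> M" using signR.IH(1) signR.prems by blast
    show "sd th ar ACs R \<Delta> K" using signR.IH(2) signR.prems by blast
  qed
next
  case (blindL1 \<Gamma> N M K)
  have n: "nseq ACs R (\<Gamma> \<union> {M, K}) N" using sd_nseq[OF blindL1.hyps(4)] .
  show ?case
  proof (rule sd.blindL1[where M=M and K=K])
    show "nseq ACs R \<Delta> N" using blindL1.hyps(1) blindL1.prems(2) by (simp add: nseq_def)
    show "Blind M K \<in> \<Delta>" using blindL1.hyps(2) blindL1.prems(1) by blast
    show "sd th ar ACs R \<Delta> K" using blindL1.IH(1) blindL1.prems by blast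
    show "sd th ar ACs R (\<Delta> \<union> {M, K}) N"
      by (rule blindL1.IH(2)) (use blindL1.prems n in \<open>auto simp: nseq_def\<close>)
  qed
next
  case (blindR \<Gamma> M K)
  show ?case
  proof (rule sd.blindR)
    show "nseq ACs R \<Delta> (Blind M K)" using blindR.hyps(1) blindR.prems(2) by (simp add: nseq_def)
    show "sd th ar ACs R \<Delta> M" using blindR.IH(1) blindR.prems by blast
    show "sd th ar ACs R \<Delta> K" using blindR.IH(2) blindR.prems by blast
  qed
next
  case (blindL2 \<Gamma> N M Rr K)
  have n: "nseq ACs R (\<Gamma> \<union> {Sign M K, Rr}) N" using sd_nseq[OF blindL2.hyps(4)] .
  show ?case
  proof (rule sd.blindL2[where M=M and K=K and Rr=Rr])
    show "nseq ACs R \<Delta> N" using blindL2.hyps(1) blindL2.prems(2) by (simp add: nseq_def)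
    show "Sign (Blind M Rr) K \<in> \<Delta>" using blindL2.hyps(2) blindL2.prems(1) by blast
    show "sd th ar ACs R \<Delta> Rr" using blindL2.IH(1) blindL2.prems by blast
    show "sd th ar ACs R (\<Delta> \<union> {Sign M K, Rr}) N"
      by (rule blindL2.IH(2)) (use blindL2.prems n in \<open>auto simp: nseq_def\<close>)
  qed
next
  case (gs \<Gamma> M A)
  have n: "nseq ACs R \<Gamma> A" using sd_nseq[OF gs.hyps(3)] .
  show ?case
  proof (rule sd.gs[where A=A])
    show "nseq ACs R \<Delta> M" using gs.hyps(1) gs.prems(2) by (simp add: nseq_def)
    show "A \<in> guarded_subterms (insert M \<Delta>)"
      using gs.hyps(2) guarded_subterms_mono[of "insert M \<Gamma>" "insert M \<Delta>"] gs.prems(1) by blast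
    show "sd th ar ACs R \<Delta> A" using gs.IH(1) gs.prems by blast
    show "sd th ar ACs R (insert A \<Delta>) M"
      by (rule gs.IH(2)) (use gs.prems n in \<open>auto simp: nseq_def\<close>)
  qed
next
  case (cs \<Gamma> M N)
  have n: "nseq ACs R \<Gamma> N" using sd_nseq[OF cs.hyps(3)] .
  show ?case
  proof (rule sd.cs[where N=N])
    show "nseq ACs R \<Delta> M" using cs.hyps(1) cs.prems(2) by (simp add: nseq_def)
    show "N \<in> (\<Union>t\<in>insert M \<Delta>. cross_subterms th t)" using cs.hyps(2) cs.prems(1) by blast
    show "sd th ar ACs R \<Delta> N" using cs.IH(1) cs.prems by blast
    show "sd th ar ACs R (insert N \<Delta>) M"
      by (rule cs.IH(2)) (use cs.prems n in \<open>auto simp: nseq_def\<close>)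
  qed
qed

lemma sd_cut1: "sd th ar ACs R \<Gamma> A \<Longrightarrow> sd th ar ACs R (insert A \<Gamma>) T \<Longrightarrow> sd th ar ACs R \<Gamma> T"
proof -
  assume a: "sd th ar ACs R \<Gamma> A" and b: "sd th ar ACs R (insert A \<Gamma>) T"
  have "nseq ACs R \<Gamma> T" using sd_nseq[OF b] by (simp add: nseq_def)
  thus ?thesis by (rule sd.cut[OF _ a b])
qed

lemma sd_hyp: "nseq ACs R \<Gamma> M \<Longrightarrow> M \<in> \<Gamma> \<Longrightarrow> sd th ar ACs R \<Gamma> M"
  by (rule sd.idE[where C=M and i=undefined]) (auto intro: ectx.hole)

lemma sd_eqE:
  assumes "sd th ar ACs R \<Gamma> A" "irred ACs R B" "(B, A) \<in> eqE ACs R"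
  shows "sd th ar ACs R \<Gamma> B"
proof -
  have n: "nseq ACs R \<Gamma> A" using sd_nseq[OF assms(1)] .
  have "sd th ar ACs R (insert A \<Gamma>) B"
    using n assms(2,3) by (intro sd.idE[where C=A and i=undefined]) (auto simp: nseq_def intro: ectx.hole)
  thus ?thesis using assms(1) sd_cut1 by blast
qed

lemma sd_cut_list:
  "(\<forall>a\<in>set L. sd th ar ACs R \<Gamma> a) \<Longrightarrow> sd th ar ACs R (\<Gamma> \<union> set L) T \<Longrightarrow> sd th ar ACs R \<Gamma> T"
proof (induction L arbitrary: \<Gamma>)
  case Nil thus ?case by simp
next
  case (Cons a L)
  have sa: "sd th ar ACs R \<Gamma> a" using Cons.prems(1) by simp
  have na: "nseq ACs R \<Gamma> a" by (rule sd_nseq[OF sa])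
  have irr: "\<forall>t\<in>insert a \<Gamma>. irred ACs R t" using na by (simp add: nseq_def)
  have 1: "\<forall>b\<in>set L. sd th ar ACs R (insert a \<Gamma>) b"
  proof
    fix b assume "b \<in> set L"
    hence "sd th ar ACs R \<Gamma> b" using Cons.prems(1) by simp
    thus "sd th ar ACs R (insert a \<Gamma>) b" by (rule sd_weak[OF _ subset_insertI irr])
  qed
  have 2: "sd th ar ACs R (insert a \<Gamma> \<union> set L) T" using Cons.prems(2) by simp
  have "sd th ar ACs R (insert a \<Gamma>) T" by (rule Cons.IH[OF 1 2])
  thus ?case by (rule sd_cut1[OF sa])
qed

section \<open>Soundness\<close>

lemma ectx_nd: "C \<in> ectx th ar i \<Delta> \<Longrightarrow> \<forall>t\<in>\<Delta>. nd ar ACs R \<Gamma> t \<Longrightarrow> nd ar ACs R \<Gamma> C"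
proof (induction rule: ectx.induct)
  case (hole M) thus ?case by simp
next
  case (sym f ts) thus ?case by (intro nd.gI) auto
qed

lemma sound: "sd th ar ACs R \<Delta> T \<Longrightarrow> \<forall>t\<in>\<Delta>. nd ar ACs R \<Gamma> t \<Longrightarrow> nd ar ACs R \<Gamma> T"
proof (induction rule: sd.induct)
  case (idE \<Gamma>' M C i)
  show ?case by (rule nd.eq[OF ectx_nd[OF idE.hyps(3) idE.prems] idE.hyps(2)])
next
  case (cut \<Gamma>' T M)
  have "nd ar ACs R \<Gamma> M" by (rule cut.IH(1)[OF cut.prems])
  hence "\<forall>t\<in>insert M \<Gamma>'. nd ar ACs R \<Gamma> t" using cut.prems by simp
  thus ?case by (rule cut.IH(2))
next
  case (pL \<Gamma>' T M N)
  have p: "nd ar ACs R \<Gamma> (Pair M N)" using pL.prems pL.hyps(2) by simp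
  have "nd ar ACs R \<Gamma> M" "nd ar ACs R \<Gamma> N" by (rule nd.pE1[OF p], rule nd.pE2[OF p])
  hence "\<forall>t\<in>\<Gamma>' \<union> {M, N}. nd ar ACs R \<Gamma> t" using pL.prems by simp
  thus ?case by (rule pL.IH)
next
  case (pR \<Gamma>' M N)
  show ?case by (rule nd.pI[OF pR.IH(1)[OF pR.prems] pR.IH(2)[OF pR.prems]])
next
  case (eL \<Gamma>' N M K)
  have p: "nd ar ACs R \<Gamma> (Enc M K)" using eL.prems eL.hyps(2) by simp
  have k: "nd ar ACs R \<Gamma> K" by (rule eL.IH(1)[OF eL.prems])
  have "nd ar ACs R \<Gamma> M" by (rule nd.eE[OF p k])
  hence "\<forall>t\<in>\<Gamma>' \<union> {M, K}. nd ar ACs R \<Gamma> t" using eL.prems k by simp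
  thus ?case by (rule eL.IH(2))
next
  case (eR \<Gamma>' M K)
  show ?case by (rule nd.eI[OF eR.IH(1)[OF eR.prems] eR.IH(2)[OF eR.prems]])
next
  case (signL \<Gamma>' N M K L)
  have e: "(Pub K, Pub L) \<in> eqE ACs R" by (rule eqE_Pub[OF acq_eqE[OF signL.hyps(4)]])
  have p: "nd ar ACs R \<Gamma> (Pub L)" using signL.prems signL.hyps(3) by simp
  have pk: "nd ar ACs R \<Gamma> (Pub K)" by (rule nd.eq[OF p e])
  have s: "nd ar ACs R \<Gamma> (Sign M K)" using signL.prems signL.hyps(2) by simp
  have "nd ar ACs R \<Gamma> M" by (rule nd.signE[OF s pk])
  hence "\<forall>t\<in>insert M \<Gamma>'. nd ar ACs R \<Gamma> t" using signL.prems by simp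
  thus ?case by (rule signL.IH)
next
  case (signR \<Gamma>' M K)
  show ?case by (rule nd.signI[OF signR.IH(1)[OF signR.prems] signR.IH(2)[OF signR.prems]])
next
  case (blindL1 \<Gamma>' N M K)
  have p: "nd ar ACs R \<Gamma> (Blind M K)" using blindL1.prems blindL1.hyps(2) by simp
  have k: "nd ar ACs R \<Gamma> K" by (rule blindL1.IH(1)[OF blindL1.prems])
  have "nd ar ACs R \<Gamma> M" by (rule nd.blindE1[OF p k])
  hence "\<forall>t\<in>\<Gamma>' \<union> {M, K}. nd ar ACs R \<Gamma> t" using blindL1.prems k by simp
  thus ?case by (rule blindL1.IH(2))
next
  case (blindR \<Gamma>' M K)
  show ?case by (rule nd.blindI[OF blindR.IH(1)[OF blindR.prems] blindR.IH(2)[OF blindR.prems]])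
next
  case (blindL2 \<Gamma>' N M Rr K)
  have p: "nd ar ACs R \<Gamma> (Sign (Blind M Rr) K)" using blindL2.prems blindL2.hyps(2) by simp
  have k: "nd ar ACs R \<Gamma> Rr" by (rule blindL2.IH(1)[OF blindL2.prems])
  have "nd ar ACs R \<Gamma> (Sign M K)" by (rule nd.blindE2[OF p k])
  hence "\<forall>t\<in>\<Gamma>' \<union> {Sign M K, Rr}. nd ar ACs R \<Gamma> t" using blindL2.prems k by simp
  thus ?case by (rule blindL2.IH(2))
next
  case (gs \<Gamma>' M A)
  have "nd ar ACs R \<Gamma> A" by (rule gs.IH(1)[OF gs.prems])
  hence "\<forall>t\<in>insert A \<Gamma>'. nd ar ACs R \<Gamma> t" using gs.prems by simp
  thus ?case by (rule gs.IH(2))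
next
  case (cs \<Gamma>' M N)
  have "nd ar ACs R \<Gamma> N" by (rule cs.IH(1)[OF cs.prems])
  hence "\<forall>t\<in>insert N \<Gamma>'. nd ar ACs R \<Gamma> t" using cs.prems by simp
  thus ?case by (rule cs.IH(2))
qed

section \<open>Completeness\<close>

lemma complete:
  assumes conv: "convergent_modAC ACs R" and lh: "\<forall>(l,r)\<in>R. \<exists>f ts. l = Fn f ts"
  shows "nd ar ACs R \<Gamma> M \<Longrightarrow> sd th ar ACs R (nf ACs R ` \<Gamma>) (nf ACs R M)"
proof -
  have irG: "\<forall>t\<in>nf ACs R ` \<Gamma>. irred ACs R t" using nf_props(2)[OF conv] by auto
  have irn: "\<And>t. irred ACs R (nf ACs R t)" using nf_props(2)[OF conv] .
  have ne: "\<And>t. (t, nf ACs R t) \<in> eqE ACs R" using nf_eqE[OF conv] .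
  have ne': "\<And>t. (nf ACs R t, t) \<in> eqE ACs R" using ne eqE_sym by blast
  note ird = irred_Enc[OF lh] irred_Sign[OF lh] irred_Blind[OF lh] irred_Pair[OF lh] irred_Pub[OF lh]
  show "nd ar ACs R \<Gamma> M \<Longrightarrow> sd th ar ACs R (nf ACs R ` \<Gamma>) (nf ACs R M)"
  proof (induction rule: nd.induct)
    case (id M)
    show ?case using id irG irn by (intro sd_hyp) (auto simp: nseq_def)
  next
    case (eE M K)
    let ?E = "Enc (nf ACs R M) (nf ACs R K)"
    have iE: "irred ACs R ?E" by (rule irred_Enc[OF lh irn irn])
    have "(?E, nf ACs R (Enc M K)) \<in> eqE ACs R" by (rule eqE_trans[OF eqE_Enc[OF ne' ne'] ne])
    hence sE: "sd th ar ACs R (nf ACs R ` \<Gamma>) ?E" by (rule sd_eqE[OF eE.IH(1) iE])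
    have "sd th ar ACs R (insert ?E (nf ACs R ` \<Gamma>)) (nf ACs R M)"
    proof (rule sd.eL[where M="nf ACs R M" and K="nf ACs R K"])
      show "nseq ACs R (insert ?E (nf ACs R ` \<Gamma>)) (nf ACs R M)" using irG irn iE by (auto simp: nseq_def)
      show "sd th ar ACs R (insert ?E (nf ACs R ` \<Gamma>)) (nf ACs R K)"
        by (rule sd_weak[OF eE.IH(2)]) (use irG iE in \<open>simp_all add: subset_insertI\<close>)
      show "sd th ar ACs R (insert ?E (nf ACs R ` \<Gamma>) \<union> {nf ACs R M, nf ACs R K}) (nf ACs R M)"
        using irG irn iE by (intro sd_hyp) (auto simp: nseq_def)
    qed simp
    thus ?case by (rule sd_cut1[OF sE])
  next
    case (blindE1 M K)
    let ?E = "Blind (nf ACs R M) (nf ACs R K)"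
    have iE: "irred ACs R ?E" by (rule irred_Blind[OF lh irn irn])
    have "(?E, nf ACs R (Blind M K)) \<in> eqE ACs R" by (rule eqE_trans[OF eqE_Blind[OF ne' ne'] ne])
    hence sE: "sd th ar ACs R (nf ACs R ` \<Gamma>) ?E" by (rule sd_eqE[OF blindE1.IH(1) iE])
    have "sd th ar ACs R (insert ?E (nf ACs R ` \<Gamma>)) (nf ACs R M)"
    proof (rule sd.blindL1[where M="nf ACs R M" and K="nf ACs R K"])
      show "nseq ACs R (insert ?E (nf ACs R ` \<Gamma>)) (nf ACs R M)" using irG irn iE by (auto simp: nseq_def)
      show "sd th ar ACs R (insert ?E (nf ACs R ` \<Gamma>)) (nf ACs R K)"
        by (rule sd_weak[OF blindE1.IH(2)]) (use irG iE in \<open>simp_all add: subset_insertI\<close>)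
      show "sd th ar ACs R (insert ?E (nf ACs R ` \<Gamma>) \<union> {nf ACs R M, nf ACs R K}) (nf ACs R M)"
        using irG irn iE by (intro sd_hyp) (auto simp: nseq_def)
    qed simp
    thus ?case by (rule sd_cut1[OF sE])
  next
    case (pE1 M N)
    let ?E = "Pair (nf ACs R M) (nf ACs R N)"
    have iE: "irred ACs R ?E" by (rule irred_Pair[OF lh irn irn])
    have "(?E, nf ACs R (Pair M N)) \<in> eqE ACs R" by (rule eqE_trans[OF eqE_Pair[OF ne' ne'] ne])
    hence sE: "sd th ar ACs R (nf ACs R ` \<Gamma>) ?E" by (rule sd_eqE[OF pE1.IH iE])
    have "sd th ar ACs R (insert ?E (nf ACs R ` \<Gamma>)) (nf ACs R M)"
    proof (rule sd.pL[where M="nf ACs R M" and N="nf ACs R N"])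
      show "nseq ACs R (insert ?E (nf ACs R ` \<Gamma>)) (nf ACs R M)" using irG irn iE by (auto simp: nseq_def)
      show "sd th ar ACs R (insert ?E (nf ACs R ` \<Gamma>) \<union> {nf ACs R M, nf ACs R N}) (nf ACs R M)"
        using irG irn iE by (intro sd_hyp) (auto simp: nseq_def)
    qed simp
    thus ?case by (rule sd_cut1[OF sE])
  next
    case (pE2 M N)
    let ?E = "Pair (nf ACs R M) (nf ACs R N)"
    have iE: "irred ACs R ?E" by (rule irred_Pair[OF lh irn irn])
    have "(?E, nf ACs R (Pair M N)) \<in> eqE ACs R" by (rule eqE_trans[OF eqE_Pair[OF ne' ne'] ne])
    hence sE: "sd th ar ACs R (nf ACs R ` \<Gamma>) ?E" by (rule sd_eqE[OF pE2.IH iE])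
    have "sd th ar ACs R (insert ?E (nf ACs R ` \<Gamma>)) (nf ACs R N)"
    proof (rule sd.pL[where M="nf ACs R M" and N="nf ACs R N"])
      show "nseq ACs R (insert ?E (nf ACs R ` \<Gamma>)) (nf ACs R N)" using irG irn iE by (auto simp: nseq_def)
      show "sd th ar ACs R (insert ?E (nf ACs R ` \<Gamma>) \<union> {nf ACs R M, nf ACs R N}) (nf ACs R N)"
        using irG irn iE by (intro sd_hyp) (auto simp: nseq_def)
    qed simp
    thus ?case by (rule sd_cut1[OF sE])
  next
    case (signE M K)
    let ?E = "Sign (nf ACs R M) (nf ACs R K)"
    let ?P = "Pub (nf ACs R K)"
    have iE: "irred ACs R ?E" by (rule irred_Sign[OF lh irn irn])
    have iP: "irred ACs R ?P" by (rule irred_Pub[OF lh irn])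
    have "(?E, nf ACs R (Sign M K)) \<in> eqE ACs R" by (rule eqE_trans[OF eqE_Sign[OF ne' ne'] ne])
    hence sE: "sd th ar ACs R (nf ACs R ` \<Gamma>) ?E" by (rule sd_eqE[OF signE.IH(1) iE])
    have "(?P, nf ACs R (Pub K)) \<in> eqE ACs R" by (rule eqE_trans[OF eqE_Pub[OF ne'] ne])
    hence "sd th ar ACs R (nf ACs R ` \<Gamma>) ?P" by (rule sd_eqE[OF signE.IH(2) iP])
    hence sP: "sd th ar ACs R (insert ?E (nf ACs R ` \<Gamma>)) ?P"
      by (rule sd_weak) (use irG iE in \<open>simp_all add: subset_insertI\<close>)
    have "sd th ar ACs R (insert ?P (insert ?E (nf ACs R ` \<Gamma>))) (nf ACs R M)"
    proof (rule sd.signL[where M="nf ACs R M" and K="nf ACs R K" and L="nf ACs R K"])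
      show "nseq ACs R (insert ?P (insert ?E (nf ACs R ` \<Gamma>))) (nf ACs R M)"
        using irG irn iE iP by (auto simp: nseq_def)
      show "sd th ar ACs R (insert (nf ACs R M) (insert ?P (insert ?E (nf ACs R ` \<Gamma>)))) (nf ACs R M)"
        using irG irn iE iP by (intro sd_hyp) (auto simp: nseq_def)
    qed simp_all
    thus ?case by (rule sd_cut1[OF sE sd_cut1[OF sP]])
  next
    case (blindE2 M Rr K)
    let ?E = "Sign (Blind (nf ACs R M) (nf ACs R Rr)) (nf ACs R K)"
    let ?S = "Sign (nf ACs R M) (nf ACs R K)"
    have iE: "irred ACs R ?E" by (rule irred_Sign[OF lh irred_Blind[OF lh irn irn] irn])
    have iS: "irred ACs R ?S" by (rule irred_Sign[OF lh irn irn])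
    have "(?E, nf ACs R (Sign (Blind M Rr) K)) \<in> eqE ACs R"
      by (rule eqE_trans[OF eqE_Sign[OF eqE_Blind[OF ne' ne'] ne'] ne])
    hence sE: "sd th ar ACs R (nf ACs R ` \<Gamma>) ?E" by (rule sd_eqE[OF blindE2.IH(1) iE])
    have "sd th ar ACs R (insert ?E (nf ACs R ` \<Gamma>)) ?S"
    proof (rule sd.blindL2[where M="nf ACs R M" and K="nf ACs R K" and Rr="nf ACs R Rr"])
      show "nseq ACs R (insert ?E (nf ACs R ` \<Gamma>)) ?S" using irG iS iE by (auto simp: nseq_def)
      show "sd th ar ACs R (insert ?E (nf ACs R ` \<Gamma>)) (nf ACs R Rr)"
        by (rule sd_weak[OF blindE2.IH(2)]) (use irG iE in \<open>simp_all add: subset_insertI\<close>)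
      show "sd th ar ACs R (insert ?E (nf ACs R ` \<Gamma>) \<union> {?S, nf ACs R Rr}) ?S"
        using irG irn iE iS by (intro sd_hyp) (auto simp: nseq_def)
    qed simp
    hence "sd th ar ACs R (nf ACs R ` \<Gamma>) ?S" by (rule sd_cut1[OF sE])
    moreover have "(nf ACs R (Sign M K), ?S) \<in> eqE ACs R"
      by (rule eqE_trans[OF ne' eqE_Sign[OF ne ne]])
    ultimately show ?case by (rule sd_eqE[OF _ irn])
  next
    case (eI M K)
    let ?E = "Enc (nf ACs R M) (nf ACs R K)"
    have iE: "irred ACs R ?E" by (rule irred_Enc[OF lh irn irn])
    have "sd th ar ACs R (nf ACs R ` \<Gamma>) ?E"
      using eI.IH irG iE by (intro sd.eR) (auto simp: nseq_def)
    moreover have "(nf ACs R (Enc M K), ?E) \<in> eqE ACs R" by (rule eqE_trans[OF ne' eqE_Enc[OF ne ne]])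
    ultimately show ?case by (rule sd_eqE[OF _ irn])
  next
    case (blindI M K)
    let ?E = "Blind (nf ACs R M) (nf ACs R K)"
    have iE: "irred ACs R ?E" by (rule irred_Blind[OF lh irn irn])
    have "sd th ar ACs R (nf ACs R ` \<Gamma>) ?E"
      using blindI.IH irG iE by (intro sd.blindR) (auto simp: nseq_def)
    moreover have "(nf ACs R (Blind M K), ?E) \<in> eqE ACs R" by (rule eqE_trans[OF ne' eqE_Blind[OF ne ne]])
    ultimately show ?case by (rule sd_eqE[OF _ irn])
  next
    case (signI M K)
    let ?E = "Sign (nf ACs R M) (nf ACs R K)"
    have iE: "irred ACs R ?E" by (rule irred_Sign[OF lh irn irn])
    have "sd th ar ACs R (nf ACs R ` \<Gamma>) ?E"
      using signI.IH irG iE by (intro sd.signR) (auto simp: nseq_def)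
    moreover have "(nf ACs R (Sign M K), ?E) \<in> eqE ACs R" by (rule eqE_trans[OF ne' eqE_Sign[OF ne ne]])
    ultimately show ?case by (rule sd_eqE[OF _ irn])
  next
    case (pI M N)
    let ?E = "Pair (nf ACs R M) (nf ACs R N)"
    have iE: "irred ACs R ?E" by (rule irred_Pair[OF lh irn irn])
    have "sd th ar ACs R (nf ACs R ` \<Gamma>) ?E"
      using pI.IH irG iE by (intro sd.pR) (auto simp: nseq_def)
    moreover have "(nf ACs R (Pair M N), ?E) \<in> eqE ACs R" by (rule eqE_trans[OF ne' eqE_Pair[OF ne ne]])
    ultimately show ?case by (rule sd_eqE[OF _ irn])
  next
    case (eq N M)
    have "(nf ACs R M, nf ACs R N) \<in> eqE ACs R"
      by (rule eqE_trans[OF ne' eqE_trans[OF eq.hyps(2) ne]])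
    thus ?case by (rule sd_eqE[OF eq.IH irn])
  next
    case (gI Ms g)
    let ?L = "map (nf ACs R) Ms"
    let ?G = "nf ACs R ` \<Gamma> \<union> set ?L"
    have all: "\<forall>a\<in>set ?L. sd th ar ACs R (nf ACs R ` \<Gamma>) a" using gI.IH by auto
    have "Fn g ?L \<in> ectx th ar (th g) ?G"
      using gI.hyps by (intro ectx.sym) (auto intro: ectx.hole)
    moreover have "(nf ACs R (Fn g Ms), Fn g ?L) \<in> eqE ACs R"
      by (rule eqE_trans[OF ne' eqE_Fn_map]) (simp add: ne)
    moreover have "nseq ACs R ?G (nf ACs R (Fn g Ms))" using irG irn by (auto simp: nseq_def)
    ultimately have "sd th ar ACs R ?G (nf ACs R (Fn g Ms))" by (intro sd.idE)
    thus ?case by (rule sd_cut_list[OF all])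
  qed
qed

theorem proposition6:
  fixes th :: "'f \<Rightarrow> 'i" and ar :: "'f \<Rightarrow> nat" and ACs :: "'f set"
    and R :: "(('n, 'v, 'f) trm \<times> ('n, 'v, 'f) trm) set"
    and \<Gamma> :: "('n, 'v, 'f) trm set" and M :: "('n, 'v, 'f) trm"
  assumes "E_setting th ar ACs R"
    and "finite \<Gamma>" and "\<forall>t\<in>\<Gamma>. ground t \<and> wft ar t"
    and "ground M" and "wft ar M"
  shows "nd ar ACs R \<Gamma> M \<longleftrightarrow> sd th ar ACs R (nf ACs R ` \<Gamma>) (nf ACs R M)"
proof -
  have conv: "convergent_modAC ACs R" using assms(1) by (simp add: E_setting_def)
  have lh: "\<forall>(l,r)\<in>R. \<exists>f ts. l = Fn f ts"
  proof (intro ballI, clarify)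
    fix l r assume lr: "(l,r) \<in> R"
    then obtain i where p: "pure th i l" and nv: "\<forall>x. l \<noteq> Var x" using assms(1) unfolding E_setting_def by fast
    show "\<exists>f ts. l = Fn f ts" using p nv by (cases l) auto
  qed
  show ?thesis
  proof
    assume "nd ar ACs R \<Gamma> M" thus "sd th ar ACs R (nf ACs R ` \<Gamma>) (nf ACs R M)" by (rule complete[OF conv lh])
  next
    assume s: "sd th ar ACs R (nf ACs R ` \<Gamma>) (nf ACs R M)"
    have "\<forall>t\<in>nf ACs R ` \<Gamma>. nd ar ACs R \<Gamma> t"
    proof
      fix t assume "t \<in> nf ACs R ` \<Gamma>"
      then obtain u where u: "u \<in> \<Gamma>" "t = nf ACs R u" by blast
      show "nd ar ACs R \<Gamma> t" unfolding u(2) by (rule nd.eq[OF nd.id[OF u(1)] eqE_sym[OF nf_eqE[OF conv]]])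
    qed
    hence "nd ar ACs R \<Gamma> (nf ACs R M)" by (rule sound[OF s])
    thus "nd ar ACs R \<Gamma> M" by (rule nd.eq[OF _ nf_eqE[OF conv]])
  qed
qed

end
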